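(* Consider $n$ agents $\mathcal{V}=\{1,\dots,n\}$ with Lagrangian dynamics $M_i(q_i)\ddot q_i+C_i(q_i,\dot q_i)\dot q_i=\tau_i$, $q_i\in\mathbb{R}^m$, with $M_i(q_i)$ symmetric positive definite. Let $\mathcal{X}_1,\dots,\mathcal{X}_n\subseteq\mathbb{R}^m$ be closed convex sets with $\mathcal{X}_0=\bigcap_{i}\mathcal{X}_i$ nonempty and bounded. Let $\sigma:[t_0,\infty)\to\mathcal{P}$ be a piecewise constant switching signal taking values in a finite set $\mathcal{P}$ of undirected graphs on $\mathcal{V}$, with switching times $t_0<t_1<t_2<\dots$ satisfying $\inf_l(t_{l+1}-t_l)\ge\tau_d>0$; let $\mathcal{N}_i(\sigma(t))$ be the neighbor set of $i$ in $\mathcal{G}_{\sigma(t)}$. Let $a_{ij}(t)=a_{ji}(t)$ be continuous weights with $a_*\le a_{ij}(t)\le a^*$ for all $i,j$ and all $t\ge0$, where $a_*,a^*>0$ are constants. Apply the control $$\tau_i=C_i(q_i,\dot q_i)\dot q_i-kM_i(q_i)\dot q_i-M_i(q_i)(q_i-P_{\mathcal{X}_i}(q_i))-M_i(q_i)\sum_{j\in\mathcal{N}_i(\sigma(t))}a_{ij}(t)(q_i-q_j),$$ so that the closed loop is $\ddot q_i=-k\dot q_i-\sum_{j\in\mathcal{N}_i(\sigma(t))}a_{ij}(t)(q_i-q_j)-(q_i-P_{\mathcal{X}_i}(q_i))$. Then for all sufficiently large $k>0$, every solution satisfies $\lim_{t\to\infty}\|q_i(t)\|_{\mathcal{X}_i}=0$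 and $\lim_{t\to\infty}\dot q_i(t)=0$ for all $i\in\mathcal{V}$.
   Context: $\|\cdot\|$ is the Euclidean norm, $\|x\|_{\mathcal{S}}=\inf_{y\in\mathcal{S}}\|x-y\|$, and $P_{\mathcal{S}}(x)$ is the Euclidean projection of $x$ onto a closed convex set $\mathcal{S}$. *)

theory Defs
  imports "HOL-Analysis.Analysis"
begin

definition undirected_graph :: "('v \<Rightarrow> 'v \<Rightarrow> bool) \<Rightarrow> bool" where
  "undirected_graph G \<longleftrightarrow> (\<forall>i j. G i j = G j i) \<and> (\<forall>i. \<not> G i i)"

definition nbrs :: "('v \<Rightarrow> 'v \<Rightarrow> bool) \<Rightarrow> 'v \<Rightarrow> 'v set" where
  "nbrs G i = {j. G i j}"

definition sym_pos_def :: "real^'m^'m \<Rightarrow> bool" where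
  "sym_pos_def A \<longleftrightarrow> transpose A = A \<and> (\<forall>y. y \<noteq> 0 \<longrightarrow> y \<bullet> (A *v y) > 0)"

end

theory Submission imports Defs begin

lemma nonincr_finite_exc:
  fixes f f' :: "real \<Rightarrow> real"
  assumes "finite S" "a \<le> b" "continuous_on {a..b} f"
   "\<And>x. x \<in> {a<..<b} - S \<Longrightarrow> (f has_real_derivative f' x) (at x)"
   "\<And>x. x \<in> {a<..<b} - S \<Longrightarrow> f' x \<le> 0"
  shows "f b \<le> f a"
proof -
  let ?g = "\<lambda>x. if x \<in> S then 0 else f' x"
  have "(?g has_integral (f b - f a)) {a..b}"
    by (rule fundamental_theorem_of_calculus_interior_strong[OF assms(1,2) _ assms(3)])
       (use assms(4) in \<open>auto simp: has_real_derivative_iff_has_vector_derivative\<close>)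
  then have "(?g has_integral (f b - f a)) {a<..<b}"
    by (simp add: has_integral_Icc_iff_Ioo)
  then have "f b - f a \<le> 0"
    by (rule has_integral_le[OF _ has_integral_0]) (use assms(5) in auto)
  then show ?thesis by simp
qed

lemma lip_finite_exc:
  fixes f f' :: "real \<Rightarrow> 'a::banach"
  assumes "finite S" "a \<le> b" "continuous_on {a..b} f"
   "\<And>x. x \<in> {a<..<b} - S \<Longrightarrow> (f has_vector_derivative f' x) (at x)"
   "\<And>x. x \<in> {a<..<b} - S \<Longrightarrow> norm (f' x) \<le> B" "0 \<le> B"
  shows "norm (f b - f a) \<le> B * (b - a)"
proof -
  let ?g = "\<lambda>x. if x \<in> S \<union> {a,b} then 0 else f' x"
  have "(?g has_integral (f b - f a)) {a..b}"
    by (rule fundamental_theorem_of_calculus_interior_strong[of "S \<union> {a,b}"])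
       (use assms in auto)
  then have "(?g has_integral (f b - f a)) (cbox a b)" by simp
  then have "norm (f b - f a) \<le> B * Henstock_Kurzweil_Integration.content (cbox a b)"
    by (rule has_integral_bound[OF assms(6)]) (use assms(5,6) in auto)
  then show ?thesis using assms(2) by simp
qed


lemma lap_ineq:
  fixes x :: "'v::finite \<Rightarrow> 'a::real_inner" and w :: "'v \<Rightarrow> 'v \<Rightarrow> real"
  assumes Es: "\<And>i j. E i j = E j i" and ws: "\<And>i j. w i j = w j i"
    and w0: "\<And>i j. 0 \<le> w i j" and wA: "\<And>i j. w i j \<le> A"
  shows "(\<Sum>i\<in>UNIV. (norm (\<Sum>j\<in>{j. E i j}. w i j *\<^sub>R (x i - x j)))\<^sup>2)
     \<le> 2 * (real CARD('v) * A) * (\<Sum>i\<in>UNIV. inner (x i) (\<Sum>j\<in>{j. E i j}. w i j *\<^sub>R (x i - x j)))"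
proof -
  define c where "c i j = (if E i j then w i j else 0)" for i j
  have c0: "0 \<le> c i j" for i j using w0 by (simp add: c_def)
  have cA: "c i j \<le> A" for i j using wA w0 by (auto simp: c_def intro: order_trans[OF w0 wA])
  have cs: "c i j = c j i" for i j using Es ws by (simp add: c_def)
  have h: "(\<Sum>j\<in>{j. E i j}. w i j *\<^sub>R (x i - x j)) = (\<Sum>j\<in>UNIV. c i j *\<^sub>R (x i - x j))" for i
  proof -
    have "(\<Sum>j\<in>{j. E i j}. w i j *\<^sub>R (x i - x j)) = (\<Sum>j\<in>{j\<in>UNIV. E i j}. w i j *\<^sub>R (x i - x j))"
      by simp
    also have "\<dots> = (\<Sum>j\<in>UNIV. if E i j then w i j *\<^sub>R (x i - x j) else 0)"
      by (rule sum.inter_filter) simp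
    also have "\<dots> = (\<Sum>j\<in>UNIV. c i j *\<^sub>R (x i - x j))"
      by (rule sum.cong) (auto simp: c_def)
    finally show ?thesis .
  qed
  define S1 where "S1 = (\<Sum>i\<in>UNIV. \<Sum>j\<in>UNIV. c i j * inner (x i) (x i - x j))"
  have inner_eq: "(\<Sum>i\<in>UNIV. inner (x i) (\<Sum>j\<in>UNIV. c i j *\<^sub>R (x i - x j))) = S1"
    by (simp add: S1_def inner_sum_right)
  have "S1 = (\<Sum>j\<in>UNIV. \<Sum>i\<in>UNIV. c i j * inner (x i) (x i - x j))"
    unfolding S1_def by (rule sum.swap)
  also have "\<dots> = (\<Sum>i\<in>UNIV. \<Sum>j\<in>UNIV. c i j * inner (x j) (x j - x i))"
    by (simp add: cs)
  finally have S1b: "S1 = (\<Sum>i\<in>UNIV. \<Sum>j\<in>UNIV. c i j * inner (x j) (x j - x i))" .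
  have D: "2 * S1 = (\<Sum>i\<in>UNIV. \<Sum>j\<in>UNIV. c i j * (norm (x i - x j))\<^sup>2)"
  proof -
    have "2 * S1 = S1 + S1" by simp
    also have "\<dots> = (\<Sum>i\<in>UNIV. \<Sum>j\<in>UNIV. c i j * inner (x i) (x i - x j) + c i j * inner (x j) (x j - x i))"
      by (subst (2) S1b) (simp add: S1_def sum.distrib)
    also have "\<dots> = (\<Sum>i\<in>UNIV. \<Sum>j\<in>UNIV. c i j * (norm (x i - x j))\<^sup>2)"
      by (rule sum.cong[OF refl], rule sum.cong[OF refl])
         (simp add: power2_norm_eq_inner inner_diff algebra_simps inner_commute)
    finally show ?thesis .
  qed
  have row: "(norm (\<Sum>j\<in>UNIV. c i j *\<^sub>R (x i - x j)))\<^sup>2 \<le> real CARD('v) * A * (\<Sum>j\<in>UNIV. c i j * (norm (x i - x j))\<^sup>2)" for i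
  proof -
    have "norm (\<Sum>j\<in>UNIV. c i j *\<^sub>R (x i - x j)) \<le> (\<Sum>j\<in>UNIV. c i j * norm (x i - x j))"
      by (rule order_trans[OF norm_sum]) (simp add: c0)
    then have "(norm (\<Sum>j\<in>UNIV. c i j *\<^sub>R (x i - x j)))\<^sup>2 \<le> (\<Sum>j\<in>UNIV. c i j * norm (x i - x j))\<^sup>2"
      by (simp add: power_mono)
    also have "\<dots> \<le> (\<Sum>j\<in>UNIV. (c i j * norm (x i - x j))\<^sup>2) * real CARD('v)"
      by (rule sum_squared_le_sum_of_squares)
    also have "\<dots> \<le> (\<Sum>j\<in>UNIV. A * (c i j * (norm (x i - x j))\<^sup>2)) * real CARD('v)"
    proof -
      have "(c i j * norm (x i - x j))\<^sup>2 \<le> A * (c i j * (norm (x i - x j))\<^sup>2)" for j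
      proof -
        have "(c i j * norm (x i - x j))\<^sup>2 = c i j * (c i j * (norm (x i - x j))\<^sup>2)"
          by (simp add: power2_eq_square)
        also have "\<dots> \<le> A * (c i j * (norm (x i - x j))\<^sup>2)"
          by (rule mult_right_mono[OF cA]) (simp add: c0)
        finally show ?thesis .
      qed
      then show ?thesis by (intro mult_right_mono sum_mono) auto
    qed
    also have "\<dots> = real CARD('v) * A * (\<Sum>j\<in>UNIV. c i j * (norm (x i - x j))\<^sup>2)"
      by (simp add: sum_distrib_left sum_distrib_right mult_ac)
    finally show ?thesis .
  qed
  have "(\<Sum>i\<in>UNIV. (norm (\<Sum>j\<in>UNIV. c i j *\<^sub>R (x i - x j)))\<^sup>2) \<le> (\<Sum>i\<in>UNIV. real CARD('v) * A * (\<Sum>j\<in>UNIV. c i j * (norm (x i - x j))\<^sup>2))"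
    by (rule sum_mono) (rule row)
  also have "\<dots> = real CARD('v) * A * (2 * S1)"
    by (simp add: D sum_distrib_left)
  finally show ?thesis by (simp add: h inner_eq)
qed

lemma spd_inj:
  fixes A :: "real^'m^'m"
  assumes "transpose A = A \<and> (\<forall>y. y \<noteq> 0 \<longrightarrow> y \<bullet> (A *v y) > 0)" "A *v x = A *v y"
  shows "x = y"
proof (rule ccontr)
  assume "x \<noteq> y"
  then have "(x - y) \<bullet> (A *v (x - y)) > 0" using assms(1) by simp
  moreover have "A *v (x - y) = 0" using assms(2) by (simp add: matrix_vector_mult_diff_distrib)
  ultimately show False by simp
qed

lemma proj_ineq:
  fixes X :: "'a::euclidean_space set"
  assumes "convex X" "closed X" "p \<in> X"
  shows "inner (z - p) (z - closest_point X z) \<ge> (norm (z - closest_point X z))\<^sup>2"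
proof -
  have "inner (z - closest_point X z) (p - closest_point X z) \<le> 0"
    by (rule closest_point_dot[OF assms])
  then show ?thesis
    by (simp add: power2_norm_eq_inner inner_diff inner_commute algebra_simps)
qed


lemma barb:
  fixes V \<phi> :: "real \<Rightarrow> real"
  assumes Vmono: "\<And>s t. T \<le> s \<Longrightarrow> s \<le> t \<Longrightarrow> V t \<le> V s"
   and Vlb: "\<And>t. T \<le> t \<Longrightarrow> 0 \<le> V t"
   and \<phi>0: "\<And>t. T \<le> t \<Longrightarrow> 0 \<le> \<phi> t"
   and lip: "\<And>s t. T \<le> s \<Longrightarrow> s \<le> t \<Longrightarrow> \<bar>\<phi> t - \<phi> s\<bar> \<le> L * (t - s)"
   and L: "0 < L" and \<beta>: "0 < \<beta>"
   and dec: "\<And>a b c. T \<le> a \<Longrightarrow> a \<le> b \<Longrightarrow> 0 \<le> c \<Longrightarrow> (\<forall>t\<in>{a..b}. c \<le> \<phi> t) \<Longrightarrow> V b \<le> V a - \<beta> * c\<^sup>2 * (b - a)"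
  shows "(\<phi> \<longlongrightarrow> 0) at_top"
proof (rule tendstoI)
  fix \<epsilon> :: real assume \<epsilon>: "0 < \<epsilon>"
  define Lim where "Lim = Inf (V ` {T..})"
  have bdd: "bdd_below (V ` {T..})" using Vlb by (auto intro!: bdd_belowI[of _ 0])
  have LimV: "Lim \<le> V t" if "T \<le> t" for t
    unfolding Lim_def by (rule cInf_lower) (use that bdd in auto)
  define \<delta> where "\<delta> = \<epsilon> / (2 * L)"
  define \<eta> where "\<eta> = \<beta> * (\<epsilon>/2)\<^sup>2 * \<delta>"
  have \<delta>: "0 < \<delta>" using \<epsilon> L by (simp add: \<delta>_def)
  have \<eta>: "0 < \<eta>" using \<epsilon> \<beta> \<delta> by (simp add: \<eta>_def)
  have "Inf (V ` {T..}) < Lim + \<eta>" using \<eta> by (simp add: Lim_def)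
  then obtain N where N: "N \<ge> T" "V N < Lim + \<eta>"
    by (subst (asm) cInf_less_iff[OF _ bdd]) auto
  have "\<phi> t < \<epsilon>" if t: "t \<ge> N" for t
  proof (rule ccontr)
    assume "\<not> \<phi> t < \<epsilon>"
    then have pt: "\<epsilon> \<le> \<phi> t" by simp
    have "\<forall>s\<in>{t..t+\<delta>}. \<epsilon>/2 \<le> \<phi> s"
    proof
      fix s assume s: "s \<in> {t..t+\<delta>}"
      have "\<bar>\<phi> s - \<phi> t\<bar> \<le> L * (s - t)" using lip[of t s] s t N by auto
      also have "\<dots> \<le> L * \<delta>" using s L by (intro mult_left_mono) auto
      also have "\<dots> = \<epsilon>/2" using L by (simp add: \<delta>_def)
      finally show "\<epsilon>/2 \<le> \<phi> s" using pt by linarith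
    qed
    then have "V (t+\<delta>) \<le> V t - \<beta> * (\<epsilon>/2)\<^sup>2 * (t + \<delta> - t)"
      using dec[of t "t+\<delta>" "\<epsilon>/2"] t N \<delta> \<epsilon> by auto
    also have "\<dots> = V t - \<eta>" by (simp add: \<eta>_def)
    also have "\<dots> \<le> V N - \<eta>" using Vmono[of N t] t N by auto
    also have "\<dots> < Lim" using N by simp
    finally show False using LimV[of "t+\<delta>"] t N \<delta> by auto
  qed
  then show "\<forall>\<^sub>F t in at_top. dist (\<phi> t) 0 < \<epsilon>"
    unfolding eventually_at_top_linorder using \<phi>0 N
    by (intro exI[of _ N]) (auto simp: dist_real_def)
qed


lemma deriv_inner_self:
  fixes f :: "real \<Rightarrow> 'a::real_inner"
  assumes "(f has_vector_derivative f') (at t)"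
  shows "((\<lambda>t. inner (f t) (f t)) has_real_derivative 2 * inner (f t) f') (at t)"
proof -
  have "((\<lambda>t. inner (f t) (f t)) has_vector_derivative (inner (f t) f' + inner f' (f t))) (at t)"
    by (rule bounded_bilinear.has_vector_derivative[OF bounded_bilinear_inner assms assms])
  then show ?thesis
    by (simp add: has_real_derivative_iff_has_vector_derivative inner_commute)
qed

lemma young_ip:
  fixes u g h :: "'a::real_inner"
  assumes "k > 0"
  shows "- inner u (g + h) \<le> k/4 * (norm u)\<^sup>2 + 2/k * ((norm g)\<^sup>2 + (norm h)\<^sup>2)"
proof -
  have 1: "0 \<le> (norm ((k/2) *\<^sub>R u + (g + h)))\<^sup>2" by simp
  have 2: "0 \<le> (norm (g - h))\<^sup>2" by simp
  have e1: "(norm ((k/2) *\<^sub>R u + (g + h)))\<^sup>2 = k^2/4 * (norm u)\<^sup>2 + k * inner u (g+h) + (norm (g+h))\<^sup>2"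
    unfolding power2_norm_eq_inner by (simp add: inner_add_left inner_add_right inner_commute algebra_simps power2_eq_square)
  have e2: "(norm (g + h))\<^sup>2 + (norm (g - h))\<^sup>2 = 2 * (norm g)\<^sup>2 + 2 * (norm h)\<^sup>2"
    by (simp add: power2_norm_eq_inner inner_add inner_diff inner_commute algebra_simps)
  have "- k * inner u (g + h) \<le> k^2/4 * (norm u)\<^sup>2 + (2 * (norm g)\<^sup>2 + 2 * (norm h)\<^sup>2)"
    using 1 2 e1 e2 by linarith
  then have "k * (- inner u (g + h)) \<le> k * (k/4 * (norm u)\<^sup>2 + 2/k * ((norm g)\<^sup>2 + (norm h)\<^sup>2))"
    using assms by (simp add: algebra_simps power2_eq_square)
  then show ?thesis using assms mult_le_cancel_left_pos[of k "- inner u (g + h)"] by simp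
qed

lemma ts_finite:
  fixes ts :: "nat \<Rightarrow> real"
  assumes "ts 0 = t0" "\<tau>d > 0" "\<And>l. ts (Suc l) - ts l \<ge> \<tau>d"
  shows "finite (range ts \<inter> {a..b})"
proof -
  have lb: "ts l \<ge> t0 + real l * \<tau>d" for l
  proof (induction l)
    case 0 then show ?case using assms by simp
  next
    case (Suc l) then show ?case using assms(3)[of l] by (simp add: algebra_simps)
  qed
  have "range ts \<inter> {a..b} \<subseteq> ts ` {..nat \<lceil>(b - t0) / \<tau>d\<rceil>}"
  proof
    fix x assume "x \<in> range ts \<inter> {a..b}"
    then obtain l where l: "x = ts l" "ts l \<le> b" by auto
    have "real l * \<tau>d \<le> b - t0" using lb[of l] l by simp
    then have "real l \<le> (b - t0) / \<tau>d" using assms(2) by (simp add: field_simps)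
    then have "l \<le> nat \<lceil>(b - t0) / \<tau>d\<rceil>" by linarith
    then show "x \<in> ts ` {..nat \<lceil>(b - t0) / \<tau>d\<rceil>}" using l by auto
  qed
  then show ?thesis by (rule finite_subset) simp
qed


lemma le_1_sq: "(y::real) \<le> 1 + y\<^sup>2"
proof -
  have "0 \<le> (y - 1/2)\<^sup>2" by simp
  also have "\<dots> = y\<^sup>2 - y + 1/4" by (simp add: power2_eq_square algebra_simps)
  finally show ?thesis by simp
qed

theorem proposition1:
  fixes X :: "'v::finite \<Rightarrow> (real^'m) set"
    and M :: "'v \<Rightarrow> real^'m \<Rightarrow> real^'m^'m"
    and C :: "'v \<Rightarrow> real^'m \<Rightarrow> real^'m \<Rightarrow> real^'m^'m"
    and P :: "('v \<Rightarrow> 'v \<Rightarrow> bool) set"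
    and \<sigma> :: "real \<Rightarrow> ('v \<Rightarrow> 'v \<Rightarrow> bool)"
    and ts :: "nat \<Rightarrow> real"
    and t0 \<tau>d a_low a_up :: real
    and a :: "'v \<Rightarrow> 'v \<Rightarrow> real \<Rightarrow> real"
  assumes M_spd: "\<And>i x. sym_pos_def (M i x)"
    and X_closed: "\<And>i. closed (X i)" and X_convex: "\<And>i. convex (X i)"
    and X0_ne: "(\<Inter>i. X i) \<noteq> {}" and X0_bdd: "bounded (\<Inter>i. X i)"
    and P_fin: "finite P" and P_graphs: "\<And>G. G \<in> P \<Longrightarrow> undirected_graph G"
    and \<sigma>_P: "\<And>t. t \<ge> t0 \<Longrightarrow> \<sigma> t \<in> P"
    and ts0: "ts 0 = t0"
    and \<tau>d_pos: "\<tau>d > 0"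
    and dwell: "\<And>l. ts (Suc l) - ts l \<ge> \<tau>d"
    and \<sigma>_pc: "\<And>l t. ts l \<le> t \<Longrightarrow> t < ts (Suc l) \<Longrightarrow> \<sigma> t = \<sigma> (ts l)"
    and a_pos: "a_low > 0" "a_up > 0"
    and a_sym: "\<And>i j t. a i j t = a j i t"
    and a_cont: "\<And>i j. continuous_on {t0..} (a i j)"
    and a_bnd: "\<And>i j t. t \<ge> 0 \<Longrightarrow> a_low \<le> a i j t \<and> a i j t \<le> a_up"
  shows "\<exists>K>0. \<forall>k>K. \<forall>(q :: 'v \<Rightarrow> real \<Rightarrow> real^'m) dq ddq.
     ((\<forall>i t. t \<ge> t0 \<longrightarrow> (q i has_vector_derivative dq i t) (at t within {t0..})) \<and>
      (\<forall>i. continuous_on {t0..} (dq i)) \<and>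
      (\<forall>i t. t \<ge> t0 \<longrightarrow> t \<notin> range ts \<longrightarrow>
          (dq i has_vector_derivative ddq i t) (at t) \<and>
          M i (q i t) *v ddq i t + C i (q i t) (dq i t) *v dq i t =
            C i (q i t) (dq i t) *v dq i t
            - k *\<^sub>R (M i (q i t) *v dq i t)
            - M i (q i t) *v (q i t - closest_point (X i) (q i t))
            - M i (q i t) *v (\<Sum>j\<in>nbrs (\<sigma> t) i. a i j t *\<^sub>R (q i t - q j t))))
     \<longrightarrow> (\<forall>i. ((\<lambda>t. infdist (q i t) (X i)) \<longlongrightarrow> 0) at_top \<and> (dq i \<longlongrightarrow> 0) at_top)"
proof -
  obtain p where p: "p \<in> (\<Inter>i. X i)" using X0_ne by blast
  have pX: "p \<in> X i" for i using p by auto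
  have Xne: "X i \<noteq> {}" for i using pX by auto
  define n where "n = real CARD('v)"
  have n1: "n \<ge> 1" unfolding n_def by simp
  define \<Lambda> where "\<Lambda> = 2 * (n * a_up)"
  have \<Lambda>pos: "\<Lambda> > 0" using n1 a_pos by (simp add: \<Lambda>_def)
  define K where "K = 2 + 2 * \<Lambda>"
  show ?thesis
    apply (rule exI[of _ K])
    apply (rule conjI)
    subgoal using \<Lambda>pos by (simp add: K_def)
    apply (intro allI impI)
    subgoal premises prems for k q dq ddq i
    proof -
      note kK = prems(1)
      note hd = prems(2)[THEN conjunct1]
      note hc = prems(2)[THEN conjunct2, THEN conjunct1]
      note he = prems(2)[THEN conjunct2, THEN conjunct2]
      have k2: "k > 2" using kK \<Lambda>pos by (simp add: K_def)
      have kpos: "k > 0" using k2 by simp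
      have k4: "2 / k * \<Lambda> \<le> k / 2"
      proof -
        have "4 * \<Lambda> \<le> k * k"
        proof -
          have "4 * \<Lambda> \<le> 2 * k" using kK \<Lambda>pos by (simp add: K_def)
          also have "\<dots> \<le> k * k" using k2 by (intro mult_right_mono) auto
          finally show ?thesis .
        qed
        then show ?thesis using kpos by (simp add: field_simps)
      qed
      define T where "T = max t0 0"
      have Tt0: "t0 \<le> T" and T0: "0 \<le> T" by (auto simp: T_def)
      define G where "G j t = q j t - closest_point (X j) (q j t)" for j t
      define H where "H j t = (\<Sum>l\<in>nbrs (\<sigma> t) j. a j l t *\<^sub>R (q j t - q l t))" for j t
      define e where "e j t = q j t - p" for j t
      define s where "s j t = dq j t + (k/2) *\<^sub>R e j t" for j t
      define V where "V t = (\<Sum>j\<in>UNIV. inner (s j t) (s j t) / 2 + k^2/8 * inner (e j t) (e j t))" for t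
      define V' where "V' t = (\<Sum>j\<in>UNIV. - (k/2) * inner (dq j t) (dq j t) - inner (dq j t) (G j t + H j t) - (k/2) * inner (e j t) (G j t + H j t))" for t
      define U where "U t = (\<Sum>j\<in>UNIV. (norm (dq j t))\<^sup>2)" for t
      define GG where "GG t = (\<Sum>j\<in>UNIV. (norm (G j t))\<^sup>2)" for t
      define \<beta> where "\<beta> = min (k/4) (k/2 - 2/k)"
      have \<beta>pos: "\<beta> > 0"
      proof -
        have "2/k < 1" using k2 by simp
        then have "k/2 - 2/k > 0" using k2 by linarith
        then show ?thesis using k2 unfolding \<beta>_def by (simp only: min_less_iff_conj) simp
      qed
      have fin: "finite (range ts \<inter> {x..y})" for x y
        by (rule ts_finite[OF ts0 \<tau>d_pos dwell])
      have dq_at: "(q j has_vector_derivative dq j t) (at t)" if "t > t0" for j t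
      proof -
        have "(q j has_vector_derivative dq j t) (at t within {t0..})" using hd that by auto
        moreover have "at t within {t0..} = at t"
          by (rule at_within_interior) (use that in simp)
        ultimately show ?thesis by simp
      qed
      have ddq_at: "(dq j has_vector_derivative ddq j t) (at t)" if "t \<ge> t0" "t \<notin> range ts" for j t
        using he that by blast
      have dyn: "ddq j t = - k *\<^sub>R dq j t - G j t - H j t" if "t \<ge> t0" "t \<notin> range ts" for j t
      proof -
        have eq: "M j (q j t) *v ddq j t + C j (q j t) (dq j t) *v dq j t =
            C j (q j t) (dq j t) *v dq j t
            - k *\<^sub>R (M j (q j t) *v dq j t)
            - M j (q j t) *v (q j t - closest_point (X j) (q j t))
            - M j (q j t) *v (\<Sum>l\<in>nbrs (\<sigma> t) j. a j l t *\<^sub>R (q j t - q l t))"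
          using he that by blast
        have "M j (q j t) *v ddq j t = M j (q j t) *v (- k *\<^sub>R dq j t - G j t - H j t)"
          using eq by (simp add: G_def H_def matrix_vector_mult_diff_distrib matrix_vector_mult_scaleR algebra_simps)
        then show ?thesis
          by (rule spd_inj[OF M_spd[unfolded sym_pos_def_def]])
      qed
      have cq: "continuous_on {t0..} (q j)" for j
        by (rule continuous_on_vector_derivative) (use hd in auto)
      have ineqG: "(norm (G j t))\<^sup>2 \<le> inner (e j t) (G j t)" for j t
        unfolding G_def e_def by (rule proj_ineq[OF X_convex X_closed pX])
      have ineqH: "(\<Sum>j\<in>UNIV. (norm (H j t))\<^sup>2) \<le> \<Lambda> * (\<Sum>j\<in>UNIV. inner (e j t) (H j t))" if "t \<ge> T" for t
      proof -
        have und: "undirected_graph (\<sigma> t)" using P_graphs \<sigma>_P that Tt0 by auto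
        have Hx: "H j t = (\<Sum>l\<in>{l. \<sigma> t j l}. a j l t *\<^sub>R (e j t - e l t))" for j
          by (simp add: H_def nbrs_def e_def)
        show ?thesis unfolding Hx \<Lambda>_def n_def
          by (rule lap_ineq) (use und a_sym a_bnd a_pos that T0 in \<open>auto simp: undirected_graph_def intro: order_trans[of 0 a_low]\<close>)
      qed
      have ds: "(s j has_vector_derivative (ddq j t + (k/2) *\<^sub>R dq j t)) (at t)" if "t > T" "t \<notin> range ts" for j t
      proof -
        have "((\<lambda>t. dq j t + (k/2) *\<^sub>R (q j t - p)) has_vector_derivative (ddq j t + (k/2) *\<^sub>R (dq j t - 0))) (at t)"
          using that Tt0 by (intro has_vector_derivative_add bounded_linear.has_vector_derivative[OF bounded_linear_scaleR_right]
              has_vector_derivative_diff ddq_at dq_at has_vector_derivative_const) auto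
        then show ?thesis by (simp add: s_def[abs_def] e_def)
      qed
      have de: "(e j has_vector_derivative dq j t) (at t)" if "t > T" for j t
      proof -
        have "((\<lambda>t. q j t - p) has_vector_derivative (dq j t - 0)) (at t)"
          using that Tt0 by (intro has_vector_derivative_diff dq_at has_vector_derivative_const) auto
        then show ?thesis by (simp add: e_def[abs_def])
      qed
      have dV: "(V has_real_derivative V' t) (at t)" if "t > T" "t \<notin> range ts" for t
      proof -
        have dj: "((\<lambda>t. inner (s j t) (s j t) / 2 + k^2/8 * inner (e j t) (e j t)) has_real_derivative
            (2 * inner (s j t) (ddq j t + (k/2) *\<^sub>R dq j t) / 2 + k^2/8 * (2 * inner (e j t) (dq j t)))) (at t)" for j
          by (intro DERIV_add DERIV_cdivide DERIV_cmult deriv_inner_self ds de that)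
        have vj: "2 * inner (s j t) (ddq j t + (k/2) *\<^sub>R dq j t) / 2 + k^2/8 * (2 * inner (e j t) (dq j t))
            = - (k/2) * inner (dq j t) (dq j t) - inner (dq j t) (G j t + H j t) - (k/2) * inner (e j t) (G j t + H j t)" for j
        proof -
          have dd: "ddq j t = - k *\<^sub>R dq j t - G j t - H j t" using dyn[of t j] that Tt0 by auto
          show ?thesis unfolding dd s_def
          by (auto simp: inner_add_left inner_add_right inner_diff_left inner_diff_right inner_commute algebra_simps power2_eq_square) (simp add: field_simps)
        qed
        have "((\<lambda>t. \<Sum>j\<in>UNIV. inner (s j t) (s j t) / 2 + k^2/8 * inner (e j t) (e j t)) has_real_derivative
            (\<Sum>j\<in>UNIV. 2 * inner (s j t) (ddq j t + (k/2) *\<^sub>R dq j t) / 2 + k^2/8 * (2 * inner (e j t) (dq j t)))) (at t)"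
          by (rule DERIV_sum) (rule dj)
        then show ?thesis unfolding vj by (simp add: V_def[abs_def] V'_def)
      qed
      have V'bnd: "V' t \<le> - \<beta> * (U t + GG t)" if "t \<ge> T" for t
      proof -
        define HH where "HH = (\<Sum>j\<in>UNIV. (norm (H j t))\<^sup>2)"
        define EG where "EG = (\<Sum>j\<in>UNIV. inner (e j t) (G j t))"
        define EH where "EH = (\<Sum>j\<in>UNIV. inner (e j t) (H j t))"
        have "V' t \<le> (\<Sum>j\<in>UNIV. - (k/4) * (norm (dq j t))\<^sup>2 + 2/k * ((norm (G j t))\<^sup>2 + (norm (H j t))\<^sup>2)
              - (k/2) * inner (e j t) (G j t) - (k/2) * inner (e j t) (H j t))"
          unfolding V'_def
        proof (rule sum_mono)
          fix j :: 'v
          have y: "- inner (dq j t) (G j t + H j t) \<le> k/4 * (norm (dq j t))\<^sup>2 + 2/k * ((norm (G j t))\<^sup>2 + (norm (H j t))\<^sup>2)"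
            by (rule young_ip[OF kpos])
          have "inner (dq j t) (dq j t) = (norm (dq j t))\<^sup>2" by (simp add: power2_norm_eq_inner)
          then show "- (k/2) * inner (dq j t) (dq j t) - inner (dq j t) (G j t + H j t) - (k/2) * inner (e j t) (G j t + H j t)
              \<le> - (k/4) * (norm (dq j t))\<^sup>2 + 2/k * ((norm (G j t))\<^sup>2 + (norm (H j t))\<^sup>2)
              - (k/2) * inner (e j t) (G j t) - (k/2) * inner (e j t) (H j t)"
            using y by (simp add: inner_add_right algebra_simps)
        qed
        also have "\<dots> = - (k/4) * U t + 2/k * GG t + 2/k * HH - (k/2) * EG - (k/2) * EH"
          by (simp add: U_def GG_def HH_def EG_def EH_def sum.distrib sum_subtractf sum_negf sum_distrib_left algebra_simps)
        finally have 1: "V' t \<le> - (k/4) * U t + 2/k * GG t + 2/k * HH - (k/2) * EG - (k/2) * EH" .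
        have 2: "GG t \<le> EG" unfolding GG_def EG_def by (rule sum_mono) (rule ineqG)
        have 3: "HH \<le> \<Lambda> * EH" unfolding HH_def EH_def by (rule ineqH[OF that])
        have HH0: "0 \<le> HH" unfolding HH_def by (simp add: sum_nonneg)
        have EH0: "0 \<le> EH" using 3 HH0 \<Lambda>pos by (metis order_trans zero_le_mult_iff not_less)
        have 4: "2/k * HH \<le> (k/2) * EH"
        proof -
          have "2/k * HH \<le> 2/k * (\<Lambda> * EH)" using 3 kpos by (intro mult_left_mono) auto
          also have "\<dots> = (2/k * \<Lambda>) * EH" by simp
          also have "\<dots> \<le> (k/2) * EH" using k4 EH0 by (rule mult_right_mono)
          finally show ?thesis .
        qed
        have 5: "(k/2) * GG t \<le> (k/2) * EG" using 2 kpos by simp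
        have U0: "0 \<le> U t" unfolding U_def by (simp add: sum_nonneg)
        have G0: "0 \<le> GG t" unfolding GG_def by (simp add: sum_nonneg)
        have "\<beta> * U t \<le> (k/4) * U t" using U0 by (intro mult_right_mono) (simp_all only: \<beta>_def min.cobounded1)
        moreover have "\<beta> * GG t \<le> (k/2 - 2/k) * GG t" using G0 by (intro mult_right_mono) (simp_all only: \<beta>_def min.cobounded2)
        ultimately show ?thesis using 1 4 5 by (simp add: algebra_simps)
      qed
      have U0: "0 \<le> U t" for t unfolding U_def by (simp add: sum_nonneg)
      have G0: "0 \<le> GG t" for t unfolding GG_def by (simp add: sum_nonneg)
      have contV: "continuous_on {x..y} V" if "T \<le> x" for x y
      proof -
        have c1: "continuous_on {x..y} (q j)" for j
          by (rule continuous_on_subset[OF cq]) (use that Tt0 in auto)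
        have c2: "continuous_on {x..y} (dq j)" for j
          by (rule continuous_on_subset[OF hc[rule_format]]) (use that Tt0 in auto)
        show ?thesis unfolding V_def[abs_def] s_def e_def
          by (intro continuous_intros c1 c2) auto
      qed
      have Vmono: "V y \<le> V x" if "T \<le> x" "x \<le> y" for x y
      proof (rule nonincr_finite_exc[OF fin[of x y] that(2) contV[OF that(1)]])
        fix z assume z: "z \<in> {x<..<y} - range ts \<inter> {x..y}"
        then have z1: "z > T" "z \<notin> range ts" using that by auto
        show "(V has_real_derivative V' z) (at z)" by (rule dV[OF z1])
        have "0 \<le> \<beta> * (U z + GG z)" using \<beta>pos U0[of z] G0[of z] by simp
        then show "V' z \<le> 0" using V'bnd[of z] z1 by simp
      qed
      have term_le: "inner (s j t) (s j t) / 2 + k^2/8 * inner (e j t) (e j t) \<le> V t" for j t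
        unfolding V_def by (rule member_le_sum) (auto intro!: add_nonneg_nonneg)
      have V0: "0 \<le> V t" for t unfolding V_def by (intro sum_nonneg add_nonneg_nonneg) auto
      define V0 where "V0 = V T"
      define Be where "Be = 1 + 8 * V0 / k^2"
      define Bs where "Bs = 1 + 2 * V0"
      define Bu where "Bu = Bs + (k/2) * Be"
      have Be0: "0 \<le> Be" using V0[of T] kpos by (simp add: Be_def V0_def)
      have VV0: "V t \<le> V0" if "t \<ge> T" for t using Vmono[OF order_refl that] by (simp add: V0_def)
      have eB: "norm (e j t) \<le> Be" if "t \<ge> T" for j t
      proof -
        have "0 \<le> inner (s j t) (s j t) / 2" by simp
        then have "k^2/8 * inner (e j t) (e j t) \<le> V0" using term_le[of j t] VV0[OF that] by linarith
        then have "k^2/8 * (norm (e j t))\<^sup>2 \<le> V0" by (simp add: power2_norm_eq_inner)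
        then have "(norm (e j t))\<^sup>2 \<le> 8 * V0 / k^2" using kpos by (simp add: field_simps)
        then show ?thesis using le_1_sq[of "norm (e j t)"] by (simp add: Be_def)
      qed
      have sB: "norm (s j t) \<le> Bs" if "t \<ge> T" for j t
      proof -
        have "0 \<le> k^2/8 * inner (e j t) (e j t)" by simp
        then have "inner (s j t) (s j t) / 2 \<le> V0" using term_le[of j t] VV0[OF that] by linarith
        then have "(norm (s j t))\<^sup>2 \<le> 2 * V0" by (simp add: power2_norm_eq_inner)
        then show ?thesis using le_1_sq[of "norm (s j t)"] by (simp add: Bs_def)
      qed
      have uB: "norm (dq j t) \<le> Bu" if "t \<ge> T" for j t
      proof -
        have "dq j t = s j t - (k/2) *\<^sub>R e j t" by (simp add: s_def)
        then have "norm (dq j t) \<le> norm (s j t) + norm ((k/2) *\<^sub>R e j t)"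
          by (metis norm_triangle_ineq4)
        also have "\<dots> \<le> Bs + (k/2) * Be"
        proof -
          have "(k/2) * norm (e j t) \<le> (k/2) * Be" using eB[OF that, of j] kpos by (intro mult_left_mono) auto
          moreover have "norm ((k/2) *\<^sub>R e j t) = (k/2) * norm (e j t)" using kpos by simp
          ultimately show ?thesis using sB[OF that, of j] by linarith
        qed
        finally show ?thesis by (simp add: Bu_def)
      qed
      have GB: "norm (G j t) \<le> norm (e j t)" for j t
        using closest_point_le[OF X_closed pX, of "q j t"] by (simp add: G_def e_def dist_norm)
      define Bh where "Bh = n * (a_up * (2 * Be))"
      have HB: "norm (H j t) \<le> Bh" if "t \<ge> T" for j t
      proof -
        have "norm (H j t) \<le> (\<Sum>l\<in>nbrs (\<sigma> t) j. norm (a j l t *\<^sub>R (q j t - q l t)))"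
          unfolding H_def by (rule norm_sum)
        also have "\<dots> \<le> (\<Sum>l\<in>nbrs (\<sigma> t) j. a_up * (2 * Be))"
        proof (rule sum_mono)
          fix l
          have ab: "a_low \<le> a j l t \<and> a j l t \<le> a_up" using a_bnd that T0 by auto
          have "norm (q j t - q l t) = norm (e j t - e l t)" by (simp add: e_def)
          also have "\<dots> \<le> norm (e j t) + norm (e l t)" by (rule norm_triangle_ineq4)
          also have "\<dots> \<le> 2 * Be" using eB[OF that, of j] eB[OF that, of l] by simp
          finally have "norm (q j t - q l t) \<le> 2 * Be" .
          then show "norm (a j l t *\<^sub>R (q j t - q l t)) \<le> a_up * (2 * Be)"
            using ab a_pos by (simp add: mult_mono)
        qed
        also have "\<dots> = real (card (nbrs (\<sigma> t) j)) * (a_up * (2 * Be))" by simp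
        also have "\<dots> \<le> n * (a_up * (2 * Be))"
          unfolding n_def using a_pos Be0
          by (intro mult_right_mono) (auto simp: card_mono)
        finally show ?thesis by (simp add: Bh_def)
      qed
      define Ba where "Ba = k * Bu + Be + Bh"
      have ddqB: "norm (ddq j t) \<le> Ba" if "t \<ge> T" "t \<notin> range ts" for j t
      proof -
        have "norm (ddq j t) = norm (- k *\<^sub>R dq j t - G j t - H j t)" using dyn[of t j] that Tt0 by simp
        also have "\<dots> \<le> norm (k *\<^sub>R dq j t) + norm (G j t) + norm (H j t)"
        proof -
          have "norm (- k *\<^sub>R dq j t - G j t - H j t) \<le> norm (- k *\<^sub>R dq j t - G j t) + norm (H j t)"
            by (rule norm_triangle_ineq4)
          also have "norm (- k *\<^sub>R dq j t - G j t) \<le> norm (- k *\<^sub>R dq j t) + norm (G j t)"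
            by (rule norm_triangle_ineq4)
          finally show ?thesis by simp
        qed
        also have "\<dots> \<le> k * Bu + Be + Bh"
        proof -
          have "k * norm (dq j t) \<le> k * Bu" using uB[OF that(1), of j] kpos by (intro mult_left_mono) auto
          moreover have "norm (k *\<^sub>R dq j t) = k * norm (dq j t)" using kpos by simp
          ultimately show ?thesis using GB[of j t] eB[OF that(1), of j] HB[OF that(1), of j] by linarith
        qed
        finally show ?thesis by (simp add: Ba_def)
      qed
      have Bu0: "0 \<le> Bu" using order_trans[OF norm_ge_zero uB[of T i]] by simp
      have Bh0: "0 \<le> Bh" using order_trans[OF norm_ge_zero HB[of T i]] by simp
      have Ba0: "0 \<le> Ba" using Bu0 Bh0 Be0 kpos by (simp add: Ba_def)
      have lip_dq: "norm (dq j y - dq j x) \<le> Ba * (y - x)" if "T \<le> x" "x \<le> y" for j x y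
      proof (rule lip_finite_exc[OF fin[of x y] that(2) _ _ _ Ba0])
        show "continuous_on {x..y} (dq j)"
          by (rule continuous_on_subset[OF hc[rule_format]]) (use that Tt0 in auto)
      next
        fix z assume z: "z \<in> {x<..<y} - range ts \<inter> {x..y}"
        then have z1: "z \<ge> T" "z \<notin> range ts" using that by auto
        show "(dq j has_vector_derivative ddq j z) (at z)" using ddq_at z1 Tt0 by auto
        show "norm (ddq j z) \<le> Ba" by (rule ddqB[OF z1])
      qed
      have lip_q: "norm (q j y - q j x) \<le> Bu * (y - x)" if "T \<le> x" "x \<le> y" for j x y
      proof (rule lip_finite_exc[of "{}" x y, OF _ that(2) _ _ _ Bu0])
        show "continuous_on {x..y} (q j)"
          by (rule continuous_on_subset[OF cq]) (use that Tt0 in auto)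
      next
        fix z assume z: "z \<in> {x<..<y} - {}"
        then have z1: "z > t0" "z \<ge> T" using that Tt0 by auto
        show "(q j has_vector_derivative dq j z) (at z)" by (rule dq_at[OF z1(1)])
        show "norm (dq j z) \<le> Bu" by (rule uB[OF z1(2)])
      qed (simp)
      have dec: "V y \<le> V x - \<beta> * c\<^sup>2 * (y - x)"
        if "T \<le> x" "x \<le> y" "\<forall>z\<in>{x..y}. c\<^sup>2 \<le> U z + GG z" for x y c
      proof -
        have "V y + \<beta> * c\<^sup>2 * y \<le> V x + \<beta> * c\<^sup>2 * x"
        proof (rule nonincr_finite_exc[OF fin[of x y] that(2), where f = "\<lambda>t. V t + \<beta> * c\<^sup>2 * t"
              and f' = "\<lambda>t. V' t + \<beta> * c\<^sup>2"])
          show "continuous_on {x..y} (\<lambda>t. V t + \<beta> * c\<^sup>2 * t)"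
            by (intro continuous_intros contV[OF that(1)])
        next
          fix z assume z: "z \<in> {x<..<y} - range ts \<inter> {x..y}"
          then have z1: "z > T" "z \<notin> range ts" using that by auto
          show "((\<lambda>t. V t + \<beta> * c\<^sup>2 * t) has_real_derivative V' z + \<beta> * c\<^sup>2) (at z)"
            by (rule derivative_eq_intros dV[OF z1] | simp)+
          have "\<beta> * c\<^sup>2 \<le> \<beta> * (U z + GG z)" using that(3) z \<beta>pos by (intro mult_left_mono) auto
          then show "V' z + \<beta> * c\<^sup>2 \<le> 0" using V'bnd[of z] z1 by simp
        qed
        then show ?thesis by (simp add: algebra_simps)
      qed
      have t1: "((\<lambda>t. norm (dq i t)) \<longlongrightarrow> 0) at_top"
      proof (rule barb[where V = V and T = T and L = "Ba + 1" and \<beta> = \<beta>])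
        show "\<And>x y. T \<le> x \<Longrightarrow> x \<le> y \<Longrightarrow> V y \<le> V x" by (rule Vmono)
        show "\<And>t. 0 \<le> V t" by (rule V0)
        show "\<And>t. 0 \<le> norm (dq i t)" by simp
        show "0 < Ba + 1" using Ba0 by simp
        show "0 < \<beta>" by (rule \<beta>pos)
      next
        fix x y assume xy: "T \<le> x" "x \<le> y"
        have "\<bar>norm (dq i y) - norm (dq i x)\<bar> \<le> norm (dq i y - dq i x)" by (rule norm_triangle_ineq3)
        also have "\<dots> \<le> Ba * (y - x)" by (rule lip_dq[OF xy])
        also have "\<dots> \<le> (Ba + 1) * (y - x)" using xy by (simp add: algebra_simps)
        finally show "\<bar>norm (dq i y) - norm (dq i x)\<bar> \<le> (Ba + 1) * (y - x)" .
      next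
        fix x y c assume xy: "T \<le> x" "x \<le> y" "0 \<le> c" and cb: "\<forall>t\<in>{x..y}. c \<le> norm (dq i t)"
        show "V y \<le> V x - \<beta> * c\<^sup>2 * (y - x)"
        proof (rule dec[OF xy(1,2)], intro ballI)
          fix z assume z: "z \<in> {x..y}"
          have "c\<^sup>2 \<le> (norm (dq i z))\<^sup>2" using cb z xy(3) by (intro power_mono) auto
          also have "\<dots> \<le> U z" unfolding U_def by (rule member_le_sum) auto
          finally show "c\<^sup>2 \<le> U z + GG z" using G0[of z] by simp
        qed
      qed
      have t2: "((\<lambda>t. norm (G i t)) \<longlongrightarrow> 0) at_top"
      proof (rule barb[where V = V and T = T and L = "2 * Bu + 1" and \<beta> = \<beta>])
        show "\<And>x y. T \<le> x \<Longrightarrow> x \<le> y \<Longrightarrow> V y \<le> V x" by (rule Vmono)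
        show "\<And>t. 0 \<le> V t" by (rule V0)
        show "\<And>t. 0 \<le> norm (G i t)" by simp
        show "0 < 2 * Bu + 1" using Bu0 by simp
        show "0 < \<beta>" by (rule \<beta>pos)
      next
        fix x y assume xy: "T \<le> x" "x \<le> y"
        have "\<bar>norm (G i y) - norm (G i x)\<bar> \<le> norm (G i y - G i x)" by (rule norm_triangle_ineq3)
        also have "G i y - G i x = (q i y - q i x) - (closest_point (X i) (q i y) - closest_point (X i) (q i x))"
          by (simp add: G_def algebra_simps)
        also have "norm \<dots> \<le> norm (q i y - q i x) + norm (closest_point (X i) (q i y) - closest_point (X i) (q i x))"
          by (rule norm_triangle_ineq4)
        also have "\<dots> \<le> 2 * norm (q i y - q i x)"
          using closest_point_lipschitz[OF X_convex[of i] X_closed[of i] Xne[of i], of "q i y" "q i x"] by (simp add: dist_norm)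
        also have "\<dots> \<le> 2 * (Bu * (y - x))" using lip_q[OF xy, of i] by simp
        also have "\<dots> \<le> (2 * Bu + 1) * (y - x)" using xy by (simp add: algebra_simps)
        finally show "\<bar>norm (G i y) - norm (G i x)\<bar> \<le> (2 * Bu + 1) * (y - x)" .
      next
        fix x y c assume xy: "T \<le> x" "x \<le> y" "0 \<le> c" and cb: "\<forall>t\<in>{x..y}. c \<le> norm (G i t)"
        show "V y \<le> V x - \<beta> * c\<^sup>2 * (y - x)"
        proof (rule dec[OF xy(1,2)], intro ballI)
          fix z assume z: "z \<in> {x..y}"
          have "c\<^sup>2 \<le> (norm (G i z))\<^sup>2" using cb z xy(3) by (intro power_mono) auto
          also have "\<dots> \<le> GG z" unfolding GG_def by (rule member_le_sum) auto
          finally show "c\<^sup>2 \<le> U z + GG z" using U0[of z] by simp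
        qed
      qed
      have r2: "(dq i \<longlongrightarrow> 0) at_top" using t1 by (simp add: tendsto_norm_zero_iff)
      have r1: "((\<lambda>t. infdist (q i t) (X i)) \<longlongrightarrow> 0) at_top"
      proof (rule tendsto_sandwich[OF _ _ tendsto_const t2])
        show "\<forall>\<^sub>F t in at_top. 0 \<le> infdist (q i t) (X i)" by (simp add: infdist_nonneg)
        show "\<forall>\<^sub>F t in at_top. infdist (q i t) (X i) \<le> norm (G i t)"
          using infdist_le[OF closest_point_in_set[OF X_closed Xne]] by (simp add: G_def dist_norm)
      qed
      show ?thesis using r1 r2 by simp
    qed
    done
qed

end
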